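(* Let $X$ be a nonempty set, let $S$ be a semigroup, let $\phi':X\to E(S)$ be a one-to-one mapping, and let $T$ be a regular subsemigroup of $S$ containing $X\phi'$ such that $T$ has no proper regular subsemigroup containing $X\phi'$. Then there is a semigroup homomorphism $\psi:FT(X)\to S$ with $[x]\psi=x\phi'$ for all $x\in X$ and $(FT(X))\psi=T$.
   Context: Let $1$ be a symbol not in $X$. Elements of height $\ge 2$ are triples $g=(g^l,g^c,g^r)$. Set $\Gamma_0(X)=\{1\}$, $\Gamma_1(X)=X$, identify each $x\in X$ with $(1,x,1)$. For $i\ge 2$, $\Gamma_i(X)$ is the set of triples $g\in\Gamma_{i-1}(X)\times\Gamma_{i-2}(X)\times\Gamma_{i-1}(X)$ with $g^l\neq g^r$ and $g^c\in\{(g^l)^l,(g^l)^r\}\cap\{(g^r)^l,(g^r)^r\}$. $\Gamma(X)=\bigcup_{i\ge0}\Gamma_i(X)$. Let $\rho$ be the smallest congruence on $\Gamma(X)^+$ containing $(1g,g),(g1,g),(gg,g)$ for all $g\in\Gamma(X)$, and $(g^cg^lg,g)$, $(gg^rg^c,g)$, $(g^rg^cgg^cg^l,\,g^rg^cg^l)$ for all $g\in\Gamma_i(X)$, $i\ge2$. $FT^1(X)=\Gamma(X)^+/\rho$, $[u]$ the class of $u$, $FT(X)=FT^1(X)\setminus\{[1]\}$. $E(S)$ is the set of idempotents of $S$. *)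

theory Defs
  imports Main
begin

text \<open>Elements of Gamma(X): the symbol 1, generators x (identified with (1,x,1)),
  and triples (g^l, g^c, g^r).\<close>
datatype 'a gam = One | Gen 'a | Tri "'a gam" "'a gam" "'a gam"

fun lft :: "'a gam \<Rightarrow> 'a gam" where
  "lft (Gen x) = One"
| "lft (Tri l c r) = l"
| "lft One = One"

fun rgt :: "'a gam \<Rightarrow> 'a gam" where
  "rgt (Gen x) = One"
| "rgt (Tri l c r) = r"
| "rgt One = One"

fun ctr :: "'a gam \<Rightarrow> 'a gam" where
  "ctr (Tri l c r) = c"
| "ctr g = g"

fun gamma :: "nat \<Rightarrow> 'a set \<Rightarrow> 'a gam set" where
  "gamma 0 X = {One}"
| "gamma (Suc 0) X = Gen ` X"
| "gamma (Suc (Suc i)) X =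
     {Tri l c r | l c r. l \<in> gamma (Suc i) X \<and> c \<in> gamma i X \<and> r \<in> gamma (Suc i) X
        \<and> l \<noteq> r \<and> c \<in> {lft l, rgt l} \<inter> {lft r, rgt r}}"

definition Gamma :: "'a set \<Rightarrow> 'a gam set" where
  "Gamma X = (\<Union>i. gamma i X)"

definition words :: "'a set \<Rightarrow> 'a gam list set" where
  "words X = {w. w \<noteq> [] \<and> set w \<subseteq> Gamma X}"

inductive rho :: "'a set \<Rightarrow> 'a gam list \<Rightarrow> 'a gam list \<Rightarrow> bool" for X where
  gen1: "g \<in> Gamma X \<Longrightarrow> rho X [One, g] [g]"
| gen2: "g \<in> Gamma X \<Longrightarrow> rho X [g, One] [g]"
| gen3: "g \<in> Gamma X \<Longrightarrow> rho X [g, g] [g]"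
| gen4: "i \<ge> 2 \<Longrightarrow> g \<in> gamma i X \<Longrightarrow> rho X [ctr g, lft g, g] [g]"
| gen5: "i \<ge> 2 \<Longrightarrow> g \<in> gamma i X \<Longrightarrow> rho X [g, rgt g, ctr g] [g]"
| gen6: "i \<ge> 2 \<Longrightarrow> g \<in> gamma i X \<Longrightarrow>
          rho X [rgt g, ctr g, g, ctr g, lft g] [rgt g, ctr g, lft g]"
| refl: "w \<in> words X \<Longrightarrow> rho X w w"
| sym: "rho X u v \<Longrightarrow> rho X v u"
| trans: "rho X u v \<Longrightarrow> rho X v w \<Longrightarrow> rho X u w"
| compat: "rho X u v \<Longrightarrow> set p \<subseteq> Gamma X \<Longrightarrow> set q \<subseteq> Gamma X \<Longrightarrow>
          rho X (p @ u @ q) (p @ v @ q)"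

definition cls :: "'a set \<Rightarrow> 'a gam list \<Rightarrow> 'a gam list set" where
  "cls X w = {v. rho X w v}"

definition FT1 :: "'a set \<Rightarrow> 'a gam list set set" where
  "FT1 X = cls X ` words X"

definition FT :: "'a set \<Rightarrow> 'a gam list set set" where
  "FT X = FT1 X - {cls X [One]}"

definition ft_mult :: "'a set \<Rightarrow> 'a gam list set \<Rightarrow> 'a gam list set \<Rightarrow> 'a gam list set" where
  "ft_mult X A B = {w. \<exists>u\<in>A. \<exists>v\<in>B. rho X (u @ v) w}"

definition idempotents :: "'s::semigroup_mult set" where
  "idempotents = {e. e * e = e}"

definition subsemigroup :: "'s::semigroup_mult set \<Rightarrow> bool" where
  "subsemigroup T \<longleftrightarrow> (\<forall>a\<in>T. \<forall>b\<in>T. a * b \<in> T)"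

definition regular_set :: "'s::semigroup_mult set \<Rightarrow> bool" where
  "regular_set T \<longleftrightarrow> (\<forall>a\<in>T. \<exists>b\<in>T. a * b * a = a)"

end

theory Submission
  imports Defs
begin



datatype 's mon = Id | El 's

instantiation mon :: (semigroup_mult) monoid_mult
begin
definition one_mon :: "'a mon" where "one_mon = Id"
fun times_mon :: "'a mon \<Rightarrow> 'a mon \<Rightarrow> 'a mon" where
  "times_mon Id y = y"
| "times_mon x Id = x"
| "times_mon (El a) (El b) = El (a * b)"
instance
proof
  fix a b c :: "'a mon"
  show "a * b * c = a * (b * c)"
    by (cases a; cases b; cases c) (simp_all add: mult.assoc)
  show "1 * a = a" by (simp add: one_mon_def)
  show "a * 1 = a" by (cases a) (simp_all add: one_mon_def)
qed
end

lemma El_mult[simp]: "El a * El b = El (a * b)" by simp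
lemma Id_one: "Id = 1" by (simp add: one_mon_def)
lemma El_ne_one[simp]: "El a \<noteq> 1" "1 \<noteq> El a" by (simp_all add: one_mon_def)

fun lev :: "'a gam \<Rightarrow> nat" where
  "lev One = 0" | "lev (Gen x) = 1" | "lev (Tri l c r) = Suc (lev l)"

lemma gamma_lev: "g \<in> gamma i X \<Longrightarrow> lev g = i"
proof (induction i arbitrary: g rule: less_induct)
  case (less i)
  show ?case
  proof (cases i)
    case 0 then show ?thesis using less.prems by simp
  next
    case (Suc j)
    show ?thesis
    proof (cases j)
      case 0 then show ?thesis using less.prems Suc by auto
    next
      case (Suc k)
      then obtain l c r where "g = Tri l c r" "l \<in> gamma (Suc k) X"
        using less.prems \<open>i = Suc j\<close> by auto
      then show ?thesis using less.IH[of "Suc k" l] \<open>i = Suc j\<close> Suc by simp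
    qed
  qed
qed

lemma Gamma_gamma: "g \<in> Gamma X \<Longrightarrow> g \<in> gamma (lev g) X"
  unfolding Gamma_def using gamma_lev by fastforce

lemma gamma_Gamma: "g \<in> gamma i X \<Longrightarrow> g \<in> Gamma X"
  unfolding Gamma_def by blast

lemma One_Gamma[simp]: "One \<in> Gamma X"
  using gamma_Gamma[of One 0 X] by simp

definition par :: "'a gam \<Rightarrow> 'a gam \<Rightarrow> bool" where
  "par p g \<longleftrightarrow> g \<noteq> One \<and> (p = lft g \<or> p = rgt g)"

definition adj :: "'a gam \<Rightarrow> 'a gam \<Rightarrow> bool" where
  "adj a b \<longleftrightarrow> par a b \<or> par b a"

lemma gamma_SS: "Tri l c r \<in> gamma (Suc (Suc i)) X \<longleftrightarrow>
   l \<in> gamma (Suc i) X \<and> c \<in> gamma i X \<and> r \<in> gamma (Suc i) X \<and> l \<noteq> r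
   \<and> c \<in> {lft l, rgt l} \<and> c \<in> {lft r, rgt r}"
  by auto

lemma par_lev:
  assumes "par p g" "g \<in> Gamma X"
  shows "p \<in> Gamma X \<and> lev g = Suc (lev p)"
proof -
  have g: "g \<in> gamma (lev g) X" using Gamma_gamma assms(2) .
  show ?thesis
  proof (cases "lev g")
    case 0 then show ?thesis using g assms(1) by (auto simp: par_def)
  next
    case (Suc j)
    show ?thesis
    proof (cases j)
      case 0 then show ?thesis using g assms(1) Suc by (auto simp: par_def)
    next
      case (Suc k)
      then obtain l c r where gg: "g = Tri l c r" "l \<in> gamma (Suc k) X" "r \<in> gamma (Suc k) X"
        using g \<open>lev g = Suc j\<close> by auto
      then have "p = l \<or> p = r" using assms(1) by (auto simp: par_def)
      then show ?thesis using gg gamma_lev[of l] gamma_lev[of r] gamma_Gamma \<open>lev g = Suc j\<close> Suc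
        by auto
    qed
  qed
qed




definition sandw :: "'m::monoid_mult \<Rightarrow> 'm \<Rightarrow> 'm \<Rightarrow> bool" where
  "sandw P Q H \<longleftrightarrow> H * H = H \<and> H * P = H \<and> Q * H = H \<and> P * H * Q = P * Q"

lemma sandw_exists:
  fixes T :: "'s::semigroup_mult set"
  assumes sub: "subsemigroup T" and reg: "regular_set T" and pT: "p \<in> T" and qT: "q \<in> T"
    and pp: "p * p = p" and qq: "q * q = q"
  shows "\<exists>h\<in>T. sandw (El p) (El q) (El h)"
proof -
  have pqT: "p * q \<in> T" using sub pT qT by (simp add: subsemigroup_def)
  then obtain x where xT: "x \<in> T" and xa: "p * q * x * (p * q) = p * q"
    using reg by (auto simp: regular_set_def)
  have A: "p * (q * (x * (p * q))) = p * q" using xa by (simp add: mult.assoc)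
  have A': "p * (q * (x * (p * (q * z)))) = p * (q * z)" for z
    using arg_cong[OF A, of "\<lambda>w. w * z"] by (simp add: mult.assoc)
  have P': "p * (p * z) = p * z" for z using arg_cong[OF pp, of "\<lambda>w. w * z"] by (simp add: mult.assoc)
  have Q': "q * (q * z) = q * z" for z using arg_cong[OF qq, of "\<lambda>w. w * z"] by (simp add: mult.assoc)
  define x' where "x' = x * (p * q) * x"
  define h where "h = q * x' * p"
  have hT: "h \<in> T" unfolding h_def x'_def using sub xT pT qT pqT
    by (simp add: subsemigroup_def)
  have "sandw (El p) (El q) (El h)"
    unfolding sandw_def h_def x'_def
    by (simp add: mult.assoc A A' P' Q' pp qq)
  then show ?thesis using hT by blast
qed

lemma sandw_par:
  fixes P Q H R C L :: "'m::monoid_mult"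
  assumes "sandw P Q H" "P = R * C" "Q = C * L" "C * C = C"
  shows "H * L * H = H" "H * R * H = H"
proof -
  have h1: "H * P = H" and h2: "Q * H = H" and h3: "P * H * Q = P * Q" and hh: "H * H = H"
    using assms(1) by (auto simp: sandw_def)
  have PQ: "P * Q = R * C * L" using assms(2-4)
    by (metis mult.assoc)
  have "H * (R * C * L) * H = H"
  proof -
    have "H * (R * C * L) * H = H * (P * H * Q) * H" using PQ h3 by simp
    also have "\<dots> = (H * P) * H * (Q * H)" by (simp add: mult.assoc)
    also have "\<dots> = H" using h1 h2 hh by (simp add: mult.assoc)
    finally show ?thesis .
  qed
  moreover have "H * L * H = H * (R * C * L) * H"
    using h1 assms(2) by (metis mult.assoc)
  moreover have "H * R * H = H * (R * C * L) * H"
    using h2 assms(3) by (metis mult.assoc)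
  ultimately show "H * L * H = H" "H * R * H = H" by simp_all
qed

fun E :: "('a \<Rightarrow> 's::semigroup_mult) \<Rightarrow> 's set \<Rightarrow> 'a gam \<Rightarrow> 's mon" where
  "E f T One = 1"
| "E f T (Gen x) = El (f x)"
| "E f T (Tri l c r) = El (SOME h. h \<in> T \<and> sandw (E f T r * E f T c) (E f T c * E f T l) (El h))"

declare E.simps(3)[simp del]

locale ctx =
  fixes X :: "'a set" and \<phi> :: "'a \<Rightarrow> 's::semigroup_mult" and T :: "'s set"
  assumes idem: "\<phi> ` X \<subseteq> idempotents" and sub: "subsemigroup T"
    and reg: "regular_set T" and gen: "\<phi> ` X \<subseteq> T"
begin

abbreviation e where "e \<equiv> E \<phi> T"

definition Inv :: "nat \<Rightarrow> 'a gam \<Rightarrow> bool" where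
  "Inv i g \<longleftrightarrow> (i = 0 \<longrightarrow> e g = 1) \<and> (i \<ge> 1 \<longrightarrow> (\<exists>s\<in>T. e g = El s)) \<and> e g * e g = e g
     \<and> (\<forall>p. par p g \<longrightarrow> e g * e p * e g = e g)
     \<and> (\<forall>l c r. g = Tri l c r \<longrightarrow> sandw (e r * e c) (e c * e l) (e g))"

lemma El_sq: "El s * El s = El s \<Longrightarrow> s * s = s" by simp

lemma inv: "g \<in> gamma i X \<Longrightarrow> Inv i g"
proof (induction i arbitrary: g rule: less_induct)
  case (less i)
  show ?case
  proof (cases i)
    case 0 then show ?thesis using less.prems by (auto simp: Inv_def par_def)
  next
    case (Suc j)
    show ?thesis
    proof (cases j)
      case 0
      then obtain x where g: "g = Gen x" "x \<in> X" using less.prems Suc by auto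
      have "\<phi> x * \<phi> x = \<phi> x" using idem g(2) by (auto simp: idempotents_def)
      moreover have "\<phi> x \<in> T" using gen g(2) by auto
      ultimately show ?thesis using g Suc 0 by (auto simp: Inv_def par_def)
    next
      case (Suc k)
      then obtain l c r where g: "g = Tri l c r" and lG: "l \<in> gamma (Suc k) X"
        and cG: "c \<in> gamma k X" and rG: "r \<in> gamma (Suc k) X" and lr: "l \<noteq> r"
        and cl: "c \<in> {lft l, rgt l}" and cr: "c \<in> {lft r, rgt r}"
        using less.prems \<open>i = Suc j\<close> by auto
      have ik: "i = Suc (Suc k)" using Suc \<open>i = Suc j\<close> by simp
      have Il: "Inv (Suc k) l" using less.IH lG ik by simp
      have Ir: "Inv (Suc k) r" using less.IH rG ik by simp
      have Ic: "Inv k c" using less.IH cG ik by simp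
      obtain l0 where l0: "l0 \<in> T" "e l = El l0" using Il by (auto simp: Inv_def)
      obtain r0 where r0: "r0 \<in> T" "e r = El r0" using Ir by (auto simp: Inv_def)
      have cc: "e c * e c = e c" using Ic by (simp add: Inv_def)
      have "l \<noteq> One" using lG gamma_lev by fastforce
      have "r \<noteq> One" using rG gamma_lev by fastforce
      have lcl: "e l * e c * e l = e l" using Il cl \<open>l \<noteq> One\<close> by (auto simp: Inv_def par_def)
      have rcr: "e r * e c * e r = e r" using Ir cr \<open>r \<noteq> One\<close> by (auto simp: Inv_def par_def)
      have PI: "(e r * e c) * (e r * e c) = e r * e c" using rcr by (metis mult.assoc)
      have QI: "(e c * e l) * (e c * e l) = e c * e l" using lcl by (metis mult.assoc)
      obtain p where p: "p \<in> T" "e r * e c = El p"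
      proof (cases k)
        case 0 then have "e c = 1" using Ic by (simp add: Inv_def)
        then show ?thesis using that r0 by simp
      next
        case (Suc k') then obtain c0 where "c0 \<in> T" "e c = El c0" using Ic by (auto simp: Inv_def)
        then show ?thesis using that[of "r0 * c0"] r0 sub by (simp add: subsemigroup_def)
      qed
      obtain q where q: "q \<in> T" "e c * e l = El q"
      proof (cases k)
        case 0 then have "e c = 1" using Ic by (simp add: Inv_def)
        then show ?thesis using that l0 by simp
      next
        case (Suc k') then obtain c0 where "c0 \<in> T" "e c = El c0" using Ic by (auto simp: Inv_def)
        then show ?thesis using that[of "c0 * l0"] l0 sub by (simp add: subsemigroup_def)
      qed
      have "p * p = p" using PI p(2) by simp
      moreover have "q * q = q" using QI q(2) by simp
      ultimately obtain h where "h \<in> T" "sandw (El p) (El q) (El h)"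
        using sandw_exists[OF sub reg p(1) q(1)] by blast
      then have ex: "\<exists>h. h \<in> T \<and> sandw (e r * e c) (e c * e l) (El h)" using p q by auto
      define hh where "hh = (SOME h. h \<in> T \<and> sandw (e r * e c) (e c * e l) (El h))"
      have hh: "hh \<in> T \<and> sandw (e r * e c) (e c * e l) (El hh)"
        unfolding hh_def using someI_ex[OF ex] .
      have eg: "e g = El hh" using g hh_def by (simp add: E.simps(3))
      have sw: "sandw (e r * e c) (e c * e l) (e g)" using hh eg by simp
      have pars: "e g * e l * e g = e g" "e g * e r * e g = e g"
        using sandw_par[OF sw HOL.refl HOL.refl cc] by auto
      have "e g * e g = e g" using sw by (simp add: sandw_def)
      moreover have "\<forall>pp. par pp g \<longrightarrow> e g * e pp * e g = e g"
        using pars g by (auto simp: par_def)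
      ultimately show ?thesis using g sw eg hh ik by (auto simp: Inv_def)
    qed
  qed
qed

lemma inv_G: "g \<in> Gamma X \<Longrightarrow> Inv (lev g) g"
  using inv Gamma_gamma by blast

lemma e_idem: "g \<in> Gamma X \<Longrightarrow> e g * e g = e g"
  using inv_G by (simp add: Inv_def)

lemma e_par: "g \<in> Gamma X \<Longrightarrow> par p g \<Longrightarrow> e g * e p * e g = e g"
  using inv_G by (simp add: Inv_def)

lemma e_sandw: "Tri l c r \<in> Gamma X \<Longrightarrow> sandw (e r * e c) (e c * e l) (e (Tri l c r))"
  using inv_G by (simp add: Inv_def)

lemma e_T: "g \<in> Gamma X \<Longrightarrow> e g = 1 \<or> (\<exists>s\<in>T. e g = El s)"
  using inv_G[of g] by (cases "lev g") (auto simp: Inv_def)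

lemma e_notOne: "g \<in> Gamma X \<Longrightarrow> g \<noteq> One \<Longrightarrow> \<exists>s\<in>T. e g = El s"
proof -
  assume a: "g \<in> Gamma X" "g \<noteq> One"
  have "g \<in> gamma (lev g) X" using Gamma_gamma a(1) .
  then have "lev g \<noteq> 0" using a(2) by (cases "lev g") auto
  then show ?thesis using inv_G[OF a(1)] by (auto simp: Inv_def)
qed

end



fun pw :: "('g \<Rightarrow> 'm::monoid_mult) \<Rightarrow> 'g list \<Rightarrow> 'm" where
  "pw f [] = 1"
| "pw f (g # w) = f g * pw f w"

lemma pw_append[simp]: "pw f (u @ v) = pw f u * pw f v"
  by (induction u) (simp_all add: mult.assoc)

lemma gamma_ge2: "2 \<le> i \<Longrightarrow> g \<in> gamma i X \<Longrightarrow>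
   \<exists>k l c r. i = Suc (Suc k) \<and> g = Tri l c r \<and> l \<in> gamma (Suc k) X \<and> c \<in> gamma k X \<and> r \<in> gamma (Suc k) X"
  by (cases i; cases "i - 1") auto

context ctx
begin

lemma rho_pw: "rho X u v \<Longrightarrow> pw e u = pw e v"
proof (induction rule: rho.induct)
  case (gen1 g) then show ?case by simp
next
  case (gen2 g) then show ?case by simp
next
  case (gen3 g) then show ?case using e_idem by simp
next
  case (gen4 i g)
  then obtain k l c r where g: "g = Tri l c r" "c \<in> gamma k X" "i = Suc (Suc k)"
    using gamma_ge2 by blast
  have sw: "sandw (e r * e c) (e c * e l) (e g)" using e_sandw gen4 g gamma_Gamma by blast
  then show ?case using g by (simp add: sandw_def mult.assoc[symmetric])
next
  case (gen5 i g)
  then obtain k l c r where g: "g = Tri l c r" "c \<in> gamma k X" "i = Suc (Suc k)"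
    using gamma_ge2 by blast
  have sw: "sandw (e r * e c) (e c * e l) (e g)" using e_sandw gen5 g gamma_Gamma by blast
  then show ?case using g by (simp add: sandw_def mult.assoc)
next
  case (gen6 i g)
  then obtain k l c r where g: "g = Tri l c r" "c \<in> gamma k X" "i = Suc (Suc k)"
    using gamma_ge2 by blast
  have sw: "sandw (e r * e c) (e c * e l) (e g)" using e_sandw gen6 g gamma_Gamma by blast
  have cc: "e c * e c = e c" using e_idem g gamma_Gamma by blast
  have "e r * e c * e g * (e c * e l) = e r * e c * (e c * e l)"
    using sw by (simp add: sandw_def)
  also have "\<dots> = e r * e c * e l" using cc by (metis mult.assoc)
  finally show ?case using g by (simp add: mult.assoc)
next
  case (refl w) then show ?case by simp
next
  case (sym u v) then show ?case by simp
next
  case (trans u v w) then show ?case by simp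
next
  case (compat u v p q) then show ?case by simp
qed

lemma pw_T: "set w \<subseteq> Gamma X \<Longrightarrow> pw e w = 1 \<or> (\<exists>s\<in>T. pw e w = El s)"
proof (induction w)
  case Nil then show ?case by simp
next
  case (Cons g w)
  then have g: "e g = 1 \<or> (\<exists>s\<in>T. e g = El s)" using e_T by auto
  from Cons have w: "pw e w = 1 \<or> (\<exists>s\<in>T. pw e w = El s)" by auto
  from g w show ?case using sub by (auto simp: subsemigroup_def)
qed

lemma pw_one: "set w \<subseteq> Gamma X \<Longrightarrow> pw e w = 1 \<Longrightarrow> set w \<subseteq> {One}"
proof (induction w)
  case Nil then show ?case by simp
next
  case (Cons g w)
  have "g = One"
  proof (rule ccontr)
    assume "g \<noteq> One"
    then obtain s where "e g = El s" using e_notOne[of g] Cons.prems by auto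
    moreover have "pw e w = 1 \<or> (\<exists>s\<in>T. pw e w = El s)" using pw_T Cons.prems by auto
    ultimately show False using Cons.prems(2) by auto
  qed
  then show ?case using Cons by auto
qed

end

lemma rho_allOne: "w \<noteq> [] \<Longrightarrow> set w \<subseteq> {One} \<Longrightarrow> rho X w [One]"
proof (induction w)
  case Nil then show ?case by simp
next
  case (Cons g w)
  then have g: "g = One" by auto
  show ?case
  proof (cases "w = []")
    case True then show ?thesis using g rho.refl[of "[One]" X] by (simp add: words_def)
  next
    case False
    then have "rho X w [One]" using Cons by auto
    then have "rho X ([One] @ w @ []) ([One] @ [One] @ [])"
      by (rule rho.compat) auto
    then have "rho X (One # w) [One, One]" by simp
    moreover have "rho X [One, One] [One]" using rho.gen1[of One X] by simp
    ultimately show ?thesis using g rho.trans by blast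
  qed
qed




fun nc :: "'a gam list \<Rightarrow> 'a gam list" where
  "nc (l # c # l' # c' # W) = Tri l' c l # l' # nc (l' # c' # W)"
| "nc [l, c, l'] = [Tri l' c l]"
| "nc _ = []"

lemma sandw_facts:
  fixes L C L' M :: "'m::monoid_mult"
  assumes sw: "sandw (L * C) (C * L') M" and cc: "C * C = C"
  shows "M * (L * C) = M" "C * M = M" "M * C = M" "L * C * L' = L * C * M * L'"
    "L * C * L' = L * C * M * (C * L')" "M * M = M" "C * L' * M = M"
proof -
  have a: "M * (L * C) = M" and b: "C * L' * M = M" and c: "L * C * M * (C * L') = L * C * (C * L')"
    and d: "M * M = M"
    using sw by (auto simp: sandw_def)
  show "M * (L * C) = M" "M * M = M" "C * L' * M = M" by fact+
  show cm: "C * M = M" using b cc by (metis mult.assoc)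
  show mc: "M * C = M" using a cc by (metis mult.assoc)
  have "L * C * L' = L * C * (C * L')" using cc by (metis mult.assoc)
  also have "\<dots> = L * C * M * (C * L')" using c by simp
  finally show "L * C * L' = L * C * M * (C * L')" .
  also have "\<dots> = L * C * (M * C) * L'" by (simp add: mult.assoc)
  finally show "L * C * L' = L * C * M * L'" using mc by (simp add: mult.assoc)
qed

context ctx
begin

definition UU where "UU = {pw e w | w. set w \<subseteq> Gamma X}"

lemma UU_one: "1 \<in> UU" unfolding UU_def by (rule CollectI, rule exI[of _ "[]"]) simp
lemma UU_e: "g \<in> Gamma X \<Longrightarrow> e g \<in> UU" unfolding UU_def by (rule CollectI, rule exI[of _ "[g]"]) simp
lemma UU_mult: "a \<in> UU \<Longrightarrow> b \<in> UU \<Longrightarrow> a * b \<in> UU"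
proof -
  assume "a \<in> UU" "b \<in> UU"
  then obtain u v where "a = pw e u" "set u \<subseteq> Gamma X" "b = pw e v" "set v \<subseteq> Gamma X"
    unfolding UU_def by blast
  then show ?thesis unfolding UU_def by (intro CollectI exI[of _ "u @ v"]) simp
qed
lemma UU_pw: "set w \<subseteq> Gamma X \<Longrightarrow> pw e w \<in> UU" unfolding UU_def by blast

inductive chain :: "nat \<Rightarrow> 'a gam list \<Rightarrow> bool" where
  single: "l \<in> Gamma X \<Longrightarrow> lev l = M \<Longrightarrow> chain M [l]"
| cons: "chain M (l' # W) \<Longrightarrow> l \<in> Gamma X \<Longrightarrow> lev l = M \<Longrightarrow> par c l \<Longrightarrow> par c l'
          \<Longrightarrow> l \<noteq> l' \<Longrightarrow> chain M (l # c # l' # W)"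

inductive_cases chain_ConsE: "chain M (l # W)"

lemma chain_tail: "chain M (l # c # W) \<Longrightarrow> \<exists>l' W'. W = l' # W' \<and> chain M (l' # W') \<and> l \<in> Gamma X
   \<and> lev l = M \<and> par c l \<and> par c l' \<and> l \<noteq> l'"
  by (erule chain_ConsE) auto

lemma chain_hd: "chain M (l # W) \<Longrightarrow> l \<in> Gamma X \<and> lev l = M"
  by (erule chain_ConsE) auto

lemma chain_set: "chain M K \<Longrightarrow> set K \<subseteq> Gamma X"
  by (induction rule: chain.induct) (auto dest: par_lev)

lemma tri_Gamma:
  assumes "l \<in> Gamma X" "l' \<in> Gamma X" "lev l = lev l'" "par c l" "par c l'" "l \<noteq> l'"
  shows "Tri l' c l \<in> Gamma X" "lev (Tri l' c l) = Suc (lev l)"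
proof -
  have c: "c \<in> Gamma X" "lev l = Suc (lev c)" using par_lev assms(1,4) by blast+
  let ?k = "lev c"
  have "l \<in> gamma (Suc ?k) X" "l' \<in> gamma (Suc ?k) X" "c \<in> gamma ?k X"
    using Gamma_gamma assms c by (metis)+
  moreover have "c \<in> {lft l, rgt l}" "c \<in> {lft l', rgt l'}" using assms(4,5) by (auto simp: par_def)
  ultimately have "Tri l' c l \<in> gamma (Suc (Suc ?k)) X" using assms(6) by auto
  then show "Tri l' c l \<in> Gamma X" by (rule gamma_Gamma)
  show "lev (Tri l' c l) = Suc (lev l)" using assms(3) by simp
qed

lemma chain_dec:
  "chain M K \<Longrightarrow> K = l # c # l' # W \<Longrightarrow>
    chain (Suc M) (nc K) \<and> length (nc K) < length K \<and> Tri l' c l \<in> Gamma X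
    \<and> (\<exists>Q z. pw e K = e l * e c * pw e (nc K) * Q
        \<and> e (Tri l' c l) * (e l * e c) = e (Tri l' c l)
        \<and> e c * e (Tri l' c l) = e (Tri l' c l)
        \<and> e (Tri l' c l) * pw e (nc K) = pw e (nc K)
        \<and> pw e (nc K) * z = pw e (nc K) \<and> Q * z = z \<and> z \<in> UU)"
proof (induction arbitrary: l c l' W rule: chain.induct)
  case (single l M) then show ?case by simp
next
  case (cons M l1 W1 l0 c0)
  then have eqs: "l0 = l" "c0 = c" "l1 = l'" "W1 = W" by auto
  have K: "l0 # c0 # l1 # W1 = l # c # l' # W" using eqs by simp
  let ?K = "l # c # l' # W"
  have l'G: "l' \<in> Gamma X" and lev': "lev l' = M" using chain_hd cons.hyps(1) eqs by auto
  have mG: "Tri l' c l \<in> Gamma X" and mlev: "lev (Tri l' c l) = Suc M"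
    using tri_Gamma[of l l' c] cons.hyps eqs l'G lev' by auto
  have cG: "c \<in> Gamma X" using par_lev cons.hyps(4) cons.hyps(2) eqs by blast
  have cc: "e c * e c = e c" using e_idem cG .
  have sw: "sandw (e l * e c) (e c * e l') (e (Tri l' c l))" using e_sandw mG by simp
  note sf = sandw_facts[OF sw cc]
  let ?m = "Tri l' c l"
  have main: "chain (Suc M) (nc ?K) \<and> length (nc ?K) < length ?K \<and> Tri l' c l \<in> Gamma X
    \<and> (\<exists>Q z. pw e ?K = e l * e c * pw e (nc ?K) * Q
        \<and> e (Tri l' c l) * (e l * e c) = e (Tri l' c l)
        \<and> e c * e (Tri l' c l) = e (Tri l' c l)
        \<and> e (Tri l' c l) * pw e (nc ?K) = pw e (nc ?K)
        \<and> pw e (nc ?K) * z = pw e (nc ?K) \<and> Q * z = z \<and> z \<in> UU)"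
  proof (cases W)
    case Nil
    have ch: "chain (Suc M) (nc ?K)" using mG mlev Nil by (simp add: chain.single)
    have ncm: "pw e (nc ?K) = e ?m" using Nil by simp
    have f1: "pw e ?K = e l * e c * pw e (nc ?K) * (e c * e l')"
      using Nil sf(5) ncm by (simp add: mult.assoc)
    have f2: "pw e (nc ?K) * e ?m = pw e (nc ?K)" using ncm sf(6) by simp
    have f3: "(e c * e l') * e ?m = e ?m" using sf(7) .
    have f4: "e ?m * pw e (nc ?K) = pw e (nc ?K)" using ncm sf(6) by simp
    have f5: "length (nc ?K) < length ?K" using Nil by simp
    show ?thesis using ch f1 f2 f3 f4 f5 mG sf(1,2) UU_e[OF mG] by blast
  next
    case (Cons c' W')
    obtain l'' W'' where W': "W' = l'' # W''" and ch': "chain M (l'' # W'')"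
      and l'ne: "l' \<noteq> l''" and pc'': "par c' l''" and pc': "par c' l'"
      using chain_tail[of M l' c' W'] cons.hyps(1) eqs Cons by auto
    have IH: "chain (Suc M) (nc (l' # c' # l'' # W'')) \<and> length (nc (l' # c' # l'' # W'')) < length (l' # c' # l'' # W'')
      \<and> Tri l'' c' l' \<in> Gamma X
      \<and> (\<exists>Q z. pw e (l' # c' # l'' # W'') = e l' * e c' * pw e (nc (l' # c' # l'' # W'')) * Q
        \<and> e (Tri l'' c' l') * (e l' * e c') = e (Tri l'' c' l')
        \<and> e c' * e (Tri l'' c' l') = e (Tri l'' c' l')
        \<and> e (Tri l'' c' l') * pw e (nc (l' # c' # l'' # W'')) = pw e (nc (l' # c' # l'' # W''))
        \<and> pw e (nc (l' # c' # l'' # W'')) * z = pw e (nc (l' # c' # l'' # W'')) \<and> Q * z = z \<and> z \<in> UU)"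
      using cons.IH[of l' c' l'' W''] eqs Cons W' by simp
    let ?K' = "l' # c' # l'' # W''"
    let ?m' = "Tri l'' c' l'"
    have ncK: "nc ?K = ?m # l' # nc ?K'" using Cons W' by simp
    have ncK': "nc ?K' = ?m' # tl (nc ?K')" by (cases W'') auto
    obtain Q z where Qz: "pw e ?K' = e l' * e c' * pw e (nc ?K') * Q"
        "e ?m' * (e l' * e c') = e ?m'" "e c' * e ?m' = e ?m'"
        "e ?m' * pw e (nc ?K') = pw e (nc ?K')"
        "pw e (nc ?K') * z = pw e (nc ?K')" "Q * z = z" "z \<in> UU"
      using IH by blast
    define b' where "b' = pw e (nc ?K')"
    have cb': "e c' * b' = b'" using Qz(3,4) unfolding b'_def by (metis mult.assoc)
    have "pw e ?K = e l * e c * (e l' * e c' * b' * Q)"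
      using Cons W' Qz(1) b'_def by (simp add: mult.assoc)
    also have "\<dots> = e l * e c * e l' * b' * Q" using cb' by (simp add: mult.assoc)
    also have "\<dots> = e l * e c * e ?m * e l' * b' * Q" using sf(4) by simp
    also have "\<dots> = e l * e c * pw e (nc ?K) * Q" using ncK b'_def by (simp add: mult.assoc)
    finally have pK: "pw e ?K = e l * e c * pw e (nc ?K) * Q" .
    have mb: "e ?m * pw e (nc ?K) = pw e (nc ?K)" using ncK sf(6) by (simp add: mult.assoc[symmetric])
    have bz: "pw e (nc ?K) * z = pw e (nc ?K)" using ncK Qz(5) by (simp add: mult.assoc)
    have chK: "chain (Suc M) (nc ?K)"
    proof -
      have "chain (Suc M) (?m' # tl (nc ?K'))" using IH ncK' by simp
      moreover have "par l' ?m" "par l' ?m'" by (auto simp: par_def)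
      moreover have "?m \<noteq> ?m'" using l'ne by simp
      ultimately show ?thesis unfolding ncK using mG mlev by (subst ncK') (rule chain.cons; simp)
    qed
    have "length (nc ?K) < length ?K" using IH ncK Cons W' by simp
    then show ?thesis using chK pK sf(1,2) mb bz Qz(6,7) mG by blast
  qed
  then show ?case using K by simp
qed

lemma chain_reg: "chain M K \<Longrightarrow> \<exists>t\<in>UU. pw e K * t * pw e K = pw e K"
proof (induction "length K" arbitrary: M K rule: less_induct)
  case less
  show ?case
  proof (cases K)
    case Nil then show ?thesis using UU_one by auto
  next
    case (Cons l rest)
    show ?thesis
    proof (cases rest)
      case Nil
      have "l \<in> Gamma X" using chain_hd less.prems Cons by blast
      then show ?thesis using Cons Nil UU_e e_idem by (intro bexI[of _ "e l"]) (auto simp: mult.assoc)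
    next
      case (Cons c rest')
      then obtain l' W where KK: "K = l # c # l' # W"
        using chain_tail less.prems \<open>K = l # rest\<close> by blast
      let ?m = "Tri l' c l"
      have D: "chain (Suc M) (nc K) \<and> length (nc K) < length K \<and> ?m \<in> Gamma X
    \<and> (\<exists>Q z. pw e K = e l * e c * pw e (nc K) * Q
        \<and> e ?m * (e l * e c) = e ?m
        \<and> e c * e ?m = e ?m
        \<and> e ?m * pw e (nc K) = pw e (nc K)
        \<and> pw e (nc K) * z = pw e (nc K) \<and> Q * z = z \<and> z \<in> UU)"
        using chain_dec[OF less.prems KK] .
      then obtain Q z where Qz: "pw e K = e l * e c * pw e (nc K) * Q"
        "e ?m * (e l * e c) = e ?m" "e ?m * pw e (nc K) = pw e (nc K)"
        "pw e (nc K) * z = pw e (nc K)" "Q * z = z" "z \<in> UU" by blast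
      obtain y where y: "y \<in> UU" "pw e (nc K) * y * pw e (nc K) = pw e (nc K)"
        using less.hyps D by blast
      define P where "P = e l * e c"
      define b where "b = pw e (nc K)"
      define x where "x = e ?m"
      have a: "pw e K = P * b * Q" using Qz(1) P_def b_def by simp
      have xP: "x * P = x" using Qz(2) x_def P_def by simp
      have xb: "x * b = b" using Qz(3) x_def b_def by simp
      have bz: "b * z = b" using Qz(4) b_def by simp
      have yb: "b * y * b = b" using y(2) b_def by simp
      have "P * b * Q * (z * y * x) * (P * b * Q) = P * (b * (Q * z)) * y * ((x * P) * b) * Q"
        by (simp add: mult.assoc)
      also have "\<dots> = P * (b * y * b) * Q" using Qz(5) xP xb bz by (simp add: mult.assoc)
      also have "\<dots> = P * b * Q" using yb by simp
      finally have "pw e K * (z * y * x) * pw e K = pw e K" using a by simp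
      moreover have "z * y * x \<in> UU" using UU_mult UU_e D y(1) Qz(6) x_def by simp
      ultimately show ?thesis by blast
    qed
  qed
qed

end



definition mu :: "nat \<Rightarrow> 'a gam list \<Rightarrow> nat" where
  "mu M W = sum_list (map (\<lambda>v. M - lev v) W)"

lemma mu_simps[simp]: "mu M [] = 0" "mu M (x # W) = (M - lev x) + mu M W"
  "mu M (U @ V) = mu M U + mu M V"
  by (simp_all add: mu_def)

definition ends_asc :: "'a gam list \<Rightarrow> bool" where
  "ends_asc W \<longleftrightarrow> (\<exists>W1 x y. W = W1 @ [x, y] \<and> par x y)"

lemma ends_asc_Cons: "ends_asc (a # b # c # W) \<Longrightarrow> ends_asc (b # c # W)"
proof -
  assume "ends_asc (a # b # c # W)"
  then obtain W1 x y where h: "a # b # c # W = W1 @ [x, y]" "par x y" unfolding ends_asc_def by blast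
  show ?thesis
  proof (cases W1)
    case Nil then show ?thesis using h by simp
  next
    case (Cons w W1') then show ?thesis using h unfolding ends_asc_def by auto
  qed
qed

lemma ends_asc_two: "ends_asc [a, b] \<Longrightarrow> par a b"
proof -
  assume "ends_asc [a, b]"
  then obtain W1 x y where h: "[a, b] = W1 @ [x, y]" "par x y" unfolding ends_asc_def by blast
  then have "length W1 = 0" by (metis add_right_cancel length_append length_Cons list.size(3) add_0)
  then show ?thesis using h by simp
qed

lemma last_two: "2 \<le> length W \<Longrightarrow> \<exists>W1 x y. W = W1 @ [x, y]"
proof -
  assume a: "2 \<le> length W"
  then have n1: "W \<noteq> []" by auto
  have n2: "butlast W \<noteq> []" using a by (cases W rule: rev_cases) auto
  have "W = butlast W @ [last W]" using n1 by simp
  also have "butlast W = butlast (butlast W) @ [last (butlast W)]" using n2 by simp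
  finally have "W = butlast (butlast W) @ [last (butlast W), last W]" by simp
  then show ?thesis by blast
qed

lemma succ_replace:
  assumes "successively P (W1 @ A @ W2)" "A \<noteq> []" "B \<noteq> []" "hd A = hd B" "last A = last B"
    "successively P B"
  shows "successively P (W1 @ B @ W2)"
proof -
  have h1: "successively P W1" "successively P (A @ W2)" "W1 = [] \<or> P (last W1) (hd A)"
    using assms(1,2) by (simp_all add: successively_append_iff)
  have h2: "successively P W2" "W2 = [] \<or> P (last A) (hd W2)"
    using h1(2) assms(2) by (simp_all add: successively_append_iff)
  have "successively P (B @ W2)"
    using h2 assms(3,5,6) by (simp add: successively_append_iff)
  then show ?thesis using h1(1,3) assms(3,4) by (simp add: successively_append_iff)
qed

context ctx
begin

definition nobad :: "nat \<Rightarrow> 'a gam list \<Rightarrow> bool" where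
  "nobad M W \<longleftrightarrow> \<not> (\<exists>W1 x u y W2. W = W1 @ [x, u, y] @ W2 \<and> par u x \<and> par u y \<and> (x = y \<or> lev u + 2 \<le> M))"

lemma nobad_Cons: "nobad M (a # W) \<Longrightarrow> nobad M W"
proof -
  assume a: "nobad M (a # W)"
  show "nobad M W" unfolding nobad_def
  proof
    assume "\<exists>W1 x u y W2. W = W1 @ [x, u, y] @ W2 \<and> par u x \<and> par u y \<and> (x = y \<or> lev u + 2 \<le> M)"
    then obtain W1 x u y W2 where "W = W1 @ [x, u, y] @ W2" "par u x" "par u y" "x = y \<or> lev u + 2 \<le> M"
      by blast
    then have "a # W = (a # W1) @ [x, u, y] @ W2" "par u x" "par u y" "x = y \<or> lev u + 2 \<le> M" by simp_all
    then show False using a unfolding nobad_def by blast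
  qed
qed

lemma par_asym: "par a b \<Longrightarrow> par b a \<Longrightarrow> a \<in> Gamma X \<Longrightarrow> b \<in> Gamma X \<Longrightarrow> False"
proof -
  assume h: "par a b" "par b a" "a \<in> Gamma X" "b \<in> Gamma X"
  have "lev b = Suc (lev a)" using par_lev[of a b X] h by blast
  moreover have "lev a = Suc (lev b)" using par_lev[of b a X] h by blast
  ultimately show False by arith
qed

lemma valley_exists:
  "successively adj W \<Longrightarrow> set W \<subseteq> Gamma X \<Longrightarrow> W = a # v # W' \<Longrightarrow> par v a \<Longrightarrow> ends_asc W \<Longrightarrow>
   \<exists>W1 x u y W2. W = W1 @ [x, u, y] @ W2 \<and> par u x \<and> par u y \<and> lev u \<le> lev v"
proof (induction W' arbitrary: a v W)
  case Nil
  then have "par a v" using ends_asc_two by simp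
  then show ?case using Nil par_asym by auto
next
  case (Cons b W'')
  have "adj v b" using Cons.prems(1,3) by simp
  show ?case
  proof (cases "par v b")
    case True
    then show ?thesis using Cons.prems by (intro exI[of _ "[]"] exI[of _ a] exI[of _ v] exI[of _ b] exI[of _ W'']) simp
  next
    case False
    then have pbv: "par b v" using \<open>adj v b\<close> by (simp add: adj_def)
    have ea: "ends_asc (v # b # W'')" using ends_asc_Cons Cons.prems(3,5) by simp
    have "\<exists>W1 x u y W2. v # b # W'' = W1 @ [x, u, y] @ W2 \<and> par u x \<and> par u y \<and> lev u \<le> lev b"
      using Cons.IH[of "v # b # W''" v b, OF _ _ HOL.refl pbv ea] Cons.prems by auto
    then obtain W1 x u y W2 where h: "v # b # W'' = W1 @ [x, u, y] @ W2" "par u x" "par u y" "lev u \<le> lev b"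
      by blast
    have "lev v = Suc (lev b)" using par_lev[OF pbv] Cons.prems(2,3) by auto
    then show ?thesis using h Cons.prems(3)
      by (intro exI[of _ "a # W1"] exI[of _ x] exI[of _ u] exI[of _ y] exI[of _ W2]) auto
  qed
qed

lemma derive_chain:
  "successively adj W \<Longrightarrow> set W \<subseteq> Gamma X \<Longrightarrow> \<forall>w\<in>set W. lev w \<le> M \<Longrightarrow> W = a # v # W' \<Longrightarrow>
   par v a \<Longrightarrow> ends_asc W \<Longrightarrow> nobad M W \<Longrightarrow> chain M W"
proof (induction "length W" arbitrary: a v W W' rule: less_induct)
  case less
  show ?case
  proof (cases W')
  case Nil
  then have "par a v" using ends_asc_two less.prems by simp
  then show ?thesis using Nil less.prems par_asym by auto
next
  case (Cons b W'')
  have WB: "W = a # v # b # W''" using less.prems(4) Cons by simp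
  have adjvb: "adj v b" using less.prems(1) WB by simp
  have aG: "a \<in> Gamma X" and vG: "v \<in> Gamma X" and bG: "b \<in> Gamma X" using less.prems(2) WB by auto
  have la: "lev a = Suc (lev v)" using par_lev[OF less.prems(5) aG] by simp
  have aM: "lev a \<le> M" using less.prems(3) WB by simp
  show ?thesis
  proof (cases "par v b")
    case False
    then have pbv: "par b v" using adjvb by (simp add: adj_def)
    obtain W1 x u y W2 where h: "v # b # W'' = W1 @ [x, u, y] @ W2" "par u x" "par u y" "lev u \<le> lev b"
    proof -
      have ea: "ends_asc (v # b # W'')" using ends_asc_Cons[of a v b W''] less.prems(6) WB by simp
      have s1: "successively adj (v # b # W'')" using less.prems(1) WB by simp
      have g1: "set (v # b # W'') \<subseteq> Gamma X" using less.prems(2) WB by simp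
      show ?thesis using valley_exists[OF s1 g1 HOL.refl pbv ea] that by blast
    qed
    have "lev v = Suc (lev b)" using par_lev[OF pbv vG] by simp
    then have "lev u + 2 \<le> M" using h(4) la aM by simp
    moreover have "W = (a # W1) @ [x, u, y] @ W2" using h(1) WB by simp
    ultimately have "\<not> nobad M W" unfolding nobad_def using h(2,3) by blast
    then show ?thesis using less.prems(7) by simp
  next
    case True
    have Wd: "W = [] @ [a, v, b] @ W''" using WB by simp
    have nb: "\<not> (a = b \<or> lev v + 2 \<le> M)"
    proof
      assume "a = b \<or> lev v + 2 \<le> M"
      then show False using less.prems(5,7) True Wd unfolding nobad_def by blast
    qed
    have lb: "lev b = Suc (lev v)" using par_lev[OF True bG] by simp
    have laM: "lev a = M" "lev b = M" using nb la aM lb by auto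
    have anb: "a \<noteq> b" using nb by simp
    show ?thesis
    proof (cases W'')
      case Nil2: Nil
      have "chain M [b]" using bG laM(2) by (rule chain.single)
      then have "chain M (a # v # b # [])"
        by (rule chain.cons[OF _ aG laM(1) less.prems(5) True anb])
      then show ?thesis using WB Nil2 by simp
    next
      case Cons2: (Cons d W3)
      have adjbd: "adj b d" using less.prems(1) WB \<open>W'' = d # W3\<close> by simp
      have "lev d \<le> M" using less.prems(3) WB \<open>W'' = d # W3\<close> by simp
      have dG: "d \<in> Gamma X" using less.prems(2) WB \<open>W'' = d # W3\<close> by simp
      have "\<not> par b d"
      proof
        assume "par b d"
        then have "lev d = Suc (lev b)" using par_lev dG by blast
        then show False using \<open>lev d \<le> M\<close> laM by simp
      qed
      then have pdb: "par d b" using adjbd by (simp add: adj_def)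
      have WW: "W = a # v # b # d # W3" using WB \<open>W'' = d # W3\<close> by simp
      have e1: "ends_asc (b # d # W3)"
        using ends_asc_Cons[of v b d W3] ends_asc_Cons[of a v b "d # W3"] less.prems(6) WW by simp
      have n1: "nobad M (b # d # W3)"
        using nobad_Cons[of M v "b # d # W3"] nobad_Cons[of M a "v # b # d # W3"] less.prems(7) WW by simp
      have s1: "successively adj (b # d # W3)" using less.prems(1) WW by simp
      have g1: "set (b # d # W3) \<subseteq> Gamma X" using less.prems(2) WW by simp
      have b1: "\<forall>w\<in>set (b # d # W3). lev w \<le> M" using less.prems(3) WW by simp
      have "chain M (b # d # W3)"
        using less.hyps[OF _ s1 g1 b1 HOL.refl pdb e1 n1] WW by simp
      then have "chain M (a # v # b # d # W3)"
        by (rule chain.cons[OF _ aG laM(1) less.prems(5) True anb])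
      then show ?thesis using WW by simp
    qed
  qed
qed
qed

end



context ctx
begin

lemma walk_reg: "successively adj W \<Longrightarrow> set W \<subseteq> Gamma X \<Longrightarrow> \<forall>w\<in>set W. lev w \<le> M
   \<Longrightarrow> \<exists>t\<in>UU. pw e W * t * pw e W = pw e W"
proof (induction "mu M W" arbitrary: W rule: less_induct)
  case less
  show ?case
  proof (cases "length W \<le> 1")
    case True
    show ?thesis
    proof (cases W)
      case Nil then show ?thesis using UU_one by (intro bexI[of _ 1]) simp_all
    next
      case (Cons g W')
      then have "W = [g]" using True by simp
      moreover have "g \<in> Gamma X" using less.prems(2) Cons by simp
      ultimately show ?thesis using UU_e e_idem by (intro bexI[of _ "e g"]) (simp_all add: mult.assoc)
    qed
  next
    case False
    then obtain a v W' where W: "W = a # v # W'"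
      by (cases W; cases "tl W") auto
    have aG: "a \<in> Gamma X" and vG: "v \<in> Gamma X" using less.prems(2) W by auto
    have adjav: "adj a v" using less.prems(1) W by simp
    show ?thesis
    proof (cases "par a v")
      case True
      let ?W0 = "v # W'"
      have lv: "lev v = Suc (lev a)" using par_lev[OF True vG] by simp
      have "lev v \<le> M" using less.prems(3) W by simp
      then have "mu M ?W0 < mu M W" using W lv by simp
      moreover have "successively adj ?W0" using less.prems(1) W by simp
      moreover have "set ?W0 \<subseteq> Gamma X" "\<forall>w\<in>set ?W0. lev w \<le> M" using less.prems(2,3) W by auto
      ultimately obtain t where t: "t \<in> UU" "pw e ?W0 * t * pw e ?W0 = pw e ?W0"
        using less.hyps by blast
      define s0 where "s0 = pw e ?W0"
      have vav: "e v * e a * e v = e v" using e_par[OF vG True] .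
      have k: "e v * e a * s0 = s0"
      proof -
        have "e v * e a * s0 = (e v * e a * e v) * pw e W'" unfolding s0_def by (simp add: mult.assoc)
        also have "\<dots> = s0" using vav unfolding s0_def by simp
        finally show ?thesis .
      qed
      have sW: "pw e W = e a * s0" using W s0_def by simp
      have "pw e W * (t * e v) * pw e W = e a * (s0 * t * (e v * e a * s0))"
        using sW by (simp add: mult.assoc)
      also have "\<dots> = pw e W" using k t(2) sW s0_def by simp
      finally show ?thesis using UU_mult[OF t(1) UU_e[OF vG]] by blast
    next
      case False
      then have pva: "par v a" using adjav by (simp add: adj_def)
      have "2 \<le> length W" using W by simp
      then obtain W1 x y where Wxy: "W = W1 @ [x, y]" using last_two by blast
      have xG: "x \<in> Gamma X" and yG: "y \<in> Gamma X" using less.prems(2) Wxy by auto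
      have sxy: "successively adj ((W1 @ [x]) @ [y])" using less.prems(1) Wxy by simp
      then have adjxy: "adj x y" by (simp add: successively_append_iff)
      have sW1x: "successively adj (W1 @ [x])" using sxy by (simp only: successively_append_iff)
      show ?thesis
      proof (cases "par y x")
        case True
        let ?W0 = "W1 @ [x]"
        have lx: "lev x = Suc (lev y)" using par_lev[OF True xG] by simp
        have "lev x \<le> M" using less.prems(3) Wxy by simp
        then have "mu M ?W0 < mu M W" using Wxy lx by simp
        moreover have "set ?W0 \<subseteq> Gamma X" "\<forall>w\<in>set ?W0. lev w \<le> M" using less.prems(2,3) Wxy by auto
        ultimately obtain t where t: "t \<in> UU" "pw e ?W0 * t * pw e ?W0 = pw e ?W0"
          using less.hyps sW1x by blast
        define s0 where "s0 = pw e ?W0"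
        have xyx: "e x * e y * e x = e x" using e_par[OF xG True] .
        have k: "s0 * e y * e x = s0"
        proof -
          have "s0 * e y * e x = pw e W1 * (e x * e y * e x)" unfolding s0_def by (simp add: mult.assoc)
          also have "\<dots> = s0" using xyx unfolding s0_def by simp
          finally show ?thesis .
        qed
        have sW: "pw e W = s0 * e y" using Wxy s0_def by (simp add: mult.assoc)
        have "pw e W * (e x * t) * pw e W = (s0 * e y * e x) * t * s0 * e y"
          using sW by (simp add: mult.assoc)
        also have "\<dots> = pw e W" using k t(2) sW s0_def by simp
        finally show ?thesis using UU_mult[OF UU_e[OF xG] t(1)] by blast
      next
        case False
        then have pxy: "par x y" using adjxy by (simp add: adj_def)
        show ?thesis
        proof (cases "nobad M W")
          case True
          have "ends_asc W" unfolding ends_asc_def using Wxy pxy by blast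
          then have "chain M W" using derive_chain[OF less.prems W pva] True by blast
          then show ?thesis using chain_reg by blast
        next
          case False
          then obtain V1 p u q V2 where B: "W = V1 @ [p, u, q] @ V2" "par u p" "par u q"
             "p = q \<or> lev u + 2 \<le> M"
            unfolding nobad_def by blast
          have pG: "p \<in> Gamma X" and qG: "q \<in> Gamma X" and uG: "u \<in> Gamma X"
            using less.prems(2) B(1) by auto
          have lp: "lev p = Suc (lev u)" using par_lev[OF B(2) pG] by simp
          have lq: "lev q = Suc (lev u)" using par_lev[OF B(3) qG] by simp
          have pM: "lev p \<le> M" using less.prems(3) B(1) by simp
          show ?thesis
          proof (cases "p = q")
            case True
            let ?W0 = "V1 @ [p] @ V2"
            have "mu M ?W0 < mu M W" using B(1) True lp pM by simp
            moreover have "successively adj ?W0"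
              using succ_replace[of adj V1 "[p, u, q]" V2 "[p]"] less.prems(1) B(1) True by simp
            moreover have "set ?W0 \<subseteq> Gamma X" "\<forall>w\<in>set ?W0. lev w \<le> M"
              using less.prems(2,3) B(1) by auto
            ultimately obtain t where t: "t \<in> UU" "pw e ?W0 * t * pw e ?W0 = pw e ?W0"
              using less.hyps by blast
            have "e p * (e u * (e p * z)) = e p * z" for z
              using arg_cong[OF e_par[OF pG B(2)], of "\<lambda>w. w * z"] by (simp add: mult.assoc)
            then have "pw e W = pw e ?W0" using B(1) True by simp
            then show ?thesis using t by auto
          next
            case False
            then have lu: "lev u + 2 \<le> M" using B(4) by simp
            let ?m = "Tri q u p"
            have mG: "?m \<in> Gamma X" and lm: "lev ?m = Suc (lev p)"
              using tri_Gamma[OF pG qG _ B(2) B(3) False] lp lq by auto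
            let ?W0 = "V1 @ [p, ?m, q] @ V2"
            have "mu M ?W0 < mu M W" using B(1) lm lp lu by simp
            moreover have "successively adj ?W0"
            proof (rule succ_replace[of adj V1 "[p, u, q]" V2 "[p, ?m, q]"])
              show "successively adj (V1 @ [p, u, q] @ V2)" using less.prems(1) B(1) by simp
              show "successively adj [p, ?m, q]" by (simp add: adj_def par_def)
            qed simp_all
            moreover have "set ?W0 \<subseteq> Gamma X" "\<forall>w\<in>set ?W0. lev w \<le> M"
              using less.prems(2,3) B(1) mG lm lp lu by auto
            ultimately obtain t where t: "t \<in> UU" "pw e ?W0 * t * pw e ?W0 = pw e ?W0"
              using less.hyps by blast
            have cc: "e u * e u = e u" using e_idem uG .
            have sw: "sandw (e p * e u) (e u * e q) (e ?m)" using e_sandw[OF mG] .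
            note sf = sandw_facts[OF sw cc]
            have "e p * (e u * e q) = e p * (e ?m * e q)"
            proof -
              have "e p * (e u * e q) = e p * e u * e ?m * e q" using sf(4) by (simp add: mult.assoc)
              also have "\<dots> = e p * (e u * e ?m) * e q" by (simp add: mult.assoc)
              also have "\<dots> = e p * (e ?m * e q)" using sf(2) by (simp add: mult.assoc)
              finally show ?thesis .
            qed
            then have "e p * (e u * (e q * z)) = e p * (e ?m * (e q * z))" for z
              using arg_cong[of _ _ "\<lambda>w. w * z"] by (simp add: mult.assoc[symmetric])
            then have "pw e W = pw e ?W0" using B(1) by simp
            then show ?thesis using t by auto
          qed
        qed
      qed
    qed
  qed
qed

end



fun asc :: "'a gam \<Rightarrow> 'a gam list" where
  "asc One = [One]" | "asc (Gen x) = [One, Gen x]" | "asc (Tri l c r) = asc c @ [l, Tri l c r]"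

fun desc :: "'a gam \<Rightarrow> 'a gam list" where
  "desc One = [One]" | "desc (Gen x) = [Gen x, One]" | "desc (Tri l c r) = [Tri l c r, r] @ desc c"

lemma asc_ne[simp]: "asc g \<noteq> []" by (induction g) auto
lemma desc_ne[simp]: "desc g \<noteq> []" by (induction g) auto

lemma glue: "successively P (xs @ [v]) \<Longrightarrow> successively P (v # ys) \<Longrightarrow> successively P (xs @ v # ys)"
  by (auto simp: successively_append_iff)

context ctx
begin

lemma ad: "g \<in> gamma i X \<Longrightarrow> successively adj (asc g) \<and> set (asc g) \<subseteq> Gamma X \<and> hd (asc g) = One
   \<and> last (asc g) = g \<and> pw e (asc g) = e g \<and> successively adj (desc g) \<and> set (desc g) \<subseteq> Gamma X
   \<and> hd (desc g) = g \<and> last (desc g) = One \<and> pw e (desc g) = e g"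
proof (induction i arbitrary: g rule: less_induct)
  case (less i)
  show ?case
  proof (cases i)
    case 0 then show ?thesis using less.prems by simp
  next
    case (Suc j)
    show ?thesis
    proof (cases j)
      case 0
      then obtain x where g: "g = Gen x" "x \<in> X" using less.prems Suc by auto
      have "Gen x \<in> Gamma X" using less.prems g gamma_Gamma by blast
      then show ?thesis using g by (simp add: adj_def par_def)
    next
      case (Suc k)
      then obtain l c r where g: "g = Tri l c r" and lG: "l \<in> gamma (Suc k) X"
        and cG: "c \<in> gamma k X" and rG: "r \<in> gamma (Suc k) X"
        and cl: "c \<in> {lft l, rgt l}" and cr: "c \<in> {lft r, rgt r}"
        using less.prems \<open>i = Suc j\<close> by auto
      have ik: "k < i" using Suc \<open>i = Suc j\<close> by simp
      note IH = less.IH[OF ik cG]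
      have "l \<noteq> One" using lG gamma_lev by fastforce
      have "r \<noteq> One" using rG gamma_lev by fastforce
      have gG: "g \<in> Gamma X" using less.prems gamma_Gamma by blast
      have sw: "sandw (e r * e c) (e c * e l) (e g)" using e_sandw gG g by simp
      have adjcl: "adj c l" using cl \<open>l \<noteq> One\<close> by (auto simp: adj_def par_def)
      have adjrc: "adj r c" using cr \<open>r \<noteq> One\<close> by (auto simp: adj_def par_def)
      have s1: "successively adj (asc g)"
      proof -
        have "successively adj (asc c @ [l, g])"
          using IH adjcl g by (auto simp: successively_append_iff adj_def par_def)
        then show ?thesis using g by simp
      qed
      have s2': "successively adj (r # desc c)" using IH adjrc by (simp add: successively_Cons)
      have "adj g r" using g by (simp add: adj_def par_def)
      then have s2: "successively adj (desc g)" using s2' g by simp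
      have p1: "pw e (asc g) = e g" using IH g sw by (simp add: sandw_def mult.assoc[symmetric])
      have p2: "pw e (desc g) = e g" using IH g sw by (simp add: sandw_def mult.assoc)
      have "set (asc g) \<subseteq> Gamma X" "set (desc g) \<subseteq> Gamma X"
        using IH g gG lG rG gamma_Gamma by auto
      then show ?thesis using s1 s2 p1 p2 IH g by simp
    qed
  qed
qed

lemma word_walk: "set w \<subseteq> Gamma X \<Longrightarrow>
   \<exists>W. successively adj W \<and> set W \<subseteq> Gamma X \<and> W \<noteq> [] \<and> hd W = One \<and> pw e W = pw e w"
proof (induction w)
  case Nil then show ?case by (intro exI[of _ "[One]"]) simp
next
  case (Cons g w)
  then obtain W' where W': "successively adj W'" "set W' \<subseteq> Gamma X" "W' \<noteq> []" "hd W' = One"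
    "pw e W' = pw e w" by auto
  show ?case
  proof (cases "g = One")
    case True then show ?thesis using W' by auto
  next
    case False
    have gG: "g \<in> Gamma X" using Cons.prems by simp
    have A: "successively adj (asc g) \<and> set (asc g) \<subseteq> Gamma X \<and> hd (asc g) = One
      \<and> last (asc g) = g \<and> pw e (asc g) = e g \<and> successively adj (desc g) \<and> set (desc g) \<subseteq> Gamma X
      \<and> hd (desc g) = g \<and> last (desc g) = One \<and> pw e (desc g) = e g"
      using ad Gamma_gamma gG by blast
    obtain A0 where A0: "asc g = A0 @ [g]" using A asc_ne by (metis append_butlast_last_id)
    have A0ne: "A0 \<noteq> []" using A0 A False by (cases A0) auto
    obtain D0 where D0: "desc g = g # D0" using A desc_ne by (metis list.collapse)
    have D0ne: "D0 \<noteq> []" using D0 A False by auto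
    obtain D1 where D1: "D0 = D1 @ [One]" using D0ne A D0 by (metis append_butlast_last_id last_ConsR)
    obtain W0 where W0: "W' = One # W0" using W' by (metis list.collapse)
    define W where "W = A0 @ g # D1 @ One # W0"
    have sa: "successively adj (A0 @ [g])" using A A0 by simp
    have sd: "successively adj (g # D1 @ [One])" using A D0 D1 by simp
    have "successively adj (A0 @ g # D1 @ [One])" using glue[OF sa sd] .
    then have "successively adj ((A0 @ g # D1) @ [One])" by simp
    from glue[OF this] have sW: "successively adj W" using W' W0 W_def by simp
    have setW: "set W \<subseteq> Gamma X" using A A0 D0 D1 W' W0 W_def by auto
    have hdW: "hd W = One" using A A0 A0ne W_def by (cases A0) auto
    have gg: "e g * e g = e g" using e_idem gG .
    have pa: "pw e A0 * e g = e g" using A A0 by simp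
    have pd: "e g * pw e D1 = e g" using A D0 D1 by simp
    have "(pw e A0 * e g) * (e g * pw e D1) * pw e W0 = pw e A0 * (e g * e g) * pw e D1 * pw e W0"
      by (simp only: mult.assoc)
    also have "\<dots> = pw e W" unfolding W_def using gg by (simp add: mult.assoc)
    finally have "pw e W = (pw e A0 * e g) * (e g * pw e D1) * pw e W0" by simp
    also have "\<dots> = e g * pw e W0" using pa pd gg by simp
    also have "\<dots> = pw e (g # w)" using W'(5) W0 by simp
    finally show ?thesis using sW setW hdW W_def by blast
  qed
qed

definition Ut where "Ut = {s. El s \<in> UU}"

lemma Ut_T: "Ut \<subseteq> T"
proof
  fix s assume "s \<in> Ut"
  then obtain w where "set w \<subseteq> Gamma X" "El s = pw e w" unfolding Ut_def UU_def by blast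
  then show "s \<in> T" using pw_T[of w] by auto
qed

lemma Ut_sub: "subsemigroup Ut"
  unfolding subsemigroup_def Ut_def using UU_mult by fastforce

lemma Ut_gen: "\<phi> ` X \<subseteq> Ut"
proof
  fix s assume "s \<in> \<phi> ` X"
  then obtain x where x: "x \<in> X" "s = \<phi> x" by blast
  then have "Gen x \<in> Gamma X" using gamma_Gamma[of "Gen x" 1 X] by simp
  then show "s \<in> Ut" using UU_e x unfolding Ut_def by fastforce
qed

lemma Ut_reg: "regular_set Ut"
  unfolding regular_set_def
proof
  fix s assume "s \<in> Ut"
  then obtain w where w: "set w \<subseteq> Gamma X" "El s = pw e w" unfolding Ut_def UU_def by blast
  then obtain W where W: "successively adj W" "set W \<subseteq> Gamma X" "pw e W = El s"
    using word_walk by metis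
  have "\<forall>v\<in>set W. lev v \<le> sum_list (map lev W)"
  proof
    fix v assume "v \<in> set W"
    then have "lev v \<in> set (map lev W)" by simp
    then show "lev v \<le> sum_list (map lev W)" by (rule member_le_sum_list) simp
  qed
  then obtain t where t: "t \<in> UU" "El s * t * El s = El s"
    using walk_reg[OF W(1,2)] W(3) by metis
  show "\<exists>b\<in>Ut. s * b * s = s"
  proof (cases t)
    case Id
    then have "s * s = s" using t(2) by (simp add: one_mon_def[symmetric])
    then show ?thesis using \<open>s \<in> Ut\<close> by (metis mult.assoc)
  next
    case (El t0)
    then show ?thesis using t unfolding Ut_def by auto
  qed
qed

end

theorem main_thm:
  fixes X :: "'a set" and \<phi> :: "'a \<Rightarrow> 's::semigroup_mult" and T :: "'s set"
  assumes "\<phi> ` X \<subseteq> idempotents"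
    and "subsemigroup T" and "regular_set T" and "\<phi> ` X \<subseteq> T"
    and "\<forall>U. U \<subseteq> T \<and> subsemigroup U \<and> regular_set U \<and> \<phi> ` X \<subseteq> U \<longrightarrow> U = T"
  shows "\<exists>\<psi> :: 'a gam list set \<Rightarrow> 's.
           (\<forall>A\<in>FT X. \<forall>B\<in>FT X. \<psi> (ft_mult X A B) = \<psi> A * \<psi> B)
         \<and> (\<forall>x\<in>X. \<psi> (cls X [Gen x]) = \<phi> x)
         \<and> \<psi> ` FT X = T"
proof -
  interpret ctx X \<phi> T using assms(1-4) by unfold_locales
  define \<psi> :: "'a gam list set \<Rightarrow> 's" where
    "\<psi> A = (case pw e (SOME w. w \<in> A) of El s \<Rightarrow> s | Id \<Rightarrow> undefined)" for A
  have val: "\<psi> (cls X w) = s" if "w \<in> words X" "pw e w = El s" for w s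
  proof -
    have ex: "\<exists>v. v \<in> cls X w" using rho.refl[OF that(1)] unfolding cls_def by blast
    have "rho X w (SOME v. v \<in> cls X w)" using someI_ex[OF ex] unfolding cls_def by simp
    then have "pw e (SOME v. v \<in> cls X w) = El s" using rho_pw that(2) by simp
    then show ?thesis unfolding \<psi>_def by simp
  qed
  have nonone: "\<exists>s. pw e w = El s" if "w \<in> words X" "cls X w \<noteq> cls X [One]" for w
  proof (rule ccontr)
    assume "\<nexists>s. pw e w = El s"
    then have "pw e w = 1" using pw_T[of w] that(1) unfolding words_def by auto
    then have "set w \<subseteq> {One}" using pw_one that(1) unfolding words_def by auto
    then have r: "rho X w [One]" using rho_allOne that(1) unfolding words_def by auto
    have "cls X w = cls X [One]"
      unfolding cls_def using r rho.sym rho.trans by blast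
    then show False using that(2) by simp
  qed
  have FTform: "\<exists>w s. A = cls X w \<and> w \<in> words X \<and> pw e w = El s \<and> \<psi> A = s" if hA: "A \<in> FT X" for A
  proof -
    obtain w where w: "A = cls X w" "w \<in> words X" using hA unfolding FT_def FT1_def by blast
    then have "cls X w \<noteq> cls X [One]" using hA unfolding FT_def by simp
    then obtain s where "pw e w = El s" using nonone w(2) by blast
    then show ?thesis using w val by blast
  qed
  have hom: "\<psi> (ft_mult X A B) = \<psi> A * \<psi> B" if hAB: "A \<in> FT X" "B \<in> FT X" for A B
  proof -
    obtain u a where u: "A = cls X u" "u \<in> words X" "pw e u = El a" "\<psi> A = a" using FTform[OF hAB(1)] by blast
    obtain v b where v: "B = cls X v" "v \<in> words X" "pw e v = El b" "\<psi> B = b" using FTform[OF hAB(2)] by blast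
    have uvw: "u @ v \<in> words X" using u(2) v(2) unfolding words_def by auto
    have "u @ v \<in> ft_mult X A B" unfolding ft_mult_def u(1) v(1) cls_def
      using rho.refl[OF u(2)] rho.refl[OF v(2)] rho.refl[OF uvw] by blast
    then have ex: "\<exists>w. w \<in> ft_mult X A B" by blast
    define w where "w = (SOME w. w \<in> ft_mult X A B)"
    have "w \<in> ft_mult X A B" unfolding w_def using someI_ex[OF ex] .
    then obtain u' v' where "u' \<in> A" "v' \<in> B" "rho X (u' @ v') w" unfolding ft_mult_def by blast
    then have "pw e w = pw e u' * pw e v'" using rho_pw[of "u' @ v'" w] by simp
    also have "\<dots> = El (a * b)" using \<open>u' \<in> A\<close> \<open>v' \<in> B\<close> u v rho_pw unfolding cls_def by auto
    finally have "\<psi> (ft_mult X A B) = a * b" unfolding \<psi>_def using w_def by simp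
    then show ?thesis using u(4) v(4) by simp
  qed
  have gens: "\<psi> (cls X [Gen x]) = \<phi> x" if "x \<in> X" for x
  proof -
    have "Gen x \<in> Gamma X" using that gamma_Gamma[of "Gen x" 1 X] by simp
    then have "[Gen x] \<in> words X" unfolding words_def by simp
    then show ?thesis using val by simp
  qed
  have img: "\<psi> ` FT X = Ut"
  proof
    show "\<psi> ` FT X \<subseteq> Ut"
    proof
      fix s assume "s \<in> \<psi> ` FT X"
      then obtain A where "A \<in> FT X" "s = \<psi> A" by blast
      then obtain w where "w \<in> words X" "pw e w = El s" using FTform by blast
      then show "s \<in> Ut" unfolding Ut_def UU_def words_def by (auto intro!: exI[of _ w])
    qed
    show "Ut \<subseteq> \<psi> ` FT X"
    proof
      fix s assume "s \<in> Ut"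
      then obtain w where w: "set w \<subseteq> Gamma X" "El s = pw e w" unfolding Ut_def UU_def by blast
      then have "w \<noteq> []" by (metis El_ne_one(1) pw.simps(1))
      then have ww: "w \<in> words X" using w unfolding words_def by simp
      have "cls X w \<noteq> cls X [One]"
      proof
        assume "cls X w = cls X [One]"
        then have "w \<in> cls X [One]" using rho.refl[OF ww] unfolding cls_def by blast
        then have "rho X [One] w" unfolding cls_def by simp
        then have "pw e w = 1" using rho_pw by fastforce
        then show False using w(2) by simp
      qed
      then have "cls X w \<in> FT X" using ww unfolding FT_def FT1_def by blast
      moreover have "\<psi> (cls X w) = s" using val ww w(2) by simp
      ultimately show "s \<in> \<psi> ` FT X" by blast
    qed
  qed
  have "Ut = T" using assms(5) Ut_T Ut_sub Ut_reg Ut_gen by blast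
  then show ?thesis using hom gens img by blast
qed



theorem corollary5p4:
  fixes X :: "'a set" and \<phi> :: "'a \<Rightarrow> 's::semigroup_mult" and T :: "'s set"
  assumes "X \<noteq> {}"
    and "inj_on \<phi> X" and "\<phi> ` X \<subseteq> idempotents"
    and "subsemigroup T" and "regular_set T" and "\<phi> ` X \<subseteq> T"
    and "\<forall>U. U \<subseteq> T \<and> subsemigroup U \<and> regular_set U \<and> \<phi> ` X \<subseteq> U \<longrightarrow> U = T"
  shows "\<exists>\<psi> :: 'a gam list set \<Rightarrow> 's.
           (\<forall>A\<in>FT X. \<forall>B\<in>FT X. \<psi> (ft_mult X A B) = \<psi> A * \<psi> B)
         \<and> (\<forall>x\<in>X. \<psi> (cls X [Gen x]) = \<phi> x)
         \<and> \<psi> ` FT X = T"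
  using main_thm[OF assms(3-7)] .

end
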